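(* Let $F\in\Gamma_0(\mathbb{R}_+)$ have a strict minimum at $s=1$ (i.e. $F(s)>0$ for $s\neq1$), let $X$ be a set and $c:X\times X\to[0,+\infty]$ be symmetric with $c(x_1,x_2)=0$ if and only if $x_1=x_2$. Then the induced marginal perspective cost $H(x_1,r_1;x_2,r_2):=H_{c(x_1,x_2)}(r_1,r_2)$ is non-negative, symmetric ($H(x_1,r_1;x_2,r_2)=H(x_2,r_2;x_1,r_1)$), and $H(x_1,r_1;x_2,r_2)=0$ if and only if either $r_1=r_2=0$, or $r_1=r_2$ and $x_1=x_2$.
   Context: $\Gamma_0(\mathbb{R}_+)$ is the set of functions $F:[0,\infty)\to[0,\infty]$ that are convex, lower semicontinuous, with $F(1)=0$. For $F\in\Gamma_0(\mathbb{R}_+)$: $\mathrm{rec}(F)(r)=\lim_{\alpha\to\infty}F(1+\alpha r)/\alpha$, $F'_\infty:=\mathrm{rec}(F)(1)$; the perspective function is $\hat F(r,t)=tF(r/t)$ for $t>0$, $\hat F(r,0)=\mathrm{rec}(F)(r)$. For $c\in[0,\infty)$ the marginal perspective function $H_c:[0,\infty)^2\to[0,\infty]$ is the lower semicontinuous envelope of $\tilde H_c(r_1,r_2)=\inf_{\theta>0}\big[\hat F(\theta,r_1)+\hat F(\theta,r_2)+\theta c\big]$ (for $r_1,r_2>0$ this equals $\inf_{\theta>0}[r_1F(\theta/r_1)+r_2F(\theta/r_2)+\theta c]$), and for $c=+\infty$, $H_\infty(r_1,r_2)=F(0)(r_1+r_2)$. *)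

theory Defs
  imports "HOL-Analysis.Analysis"
begin

text \<open>Functions F : [0,\<infinity>) \<rightarrow> [0,\<infinity>] are modelled as real \<Rightarrow> ereal; only
  values on {0..} matter.\<close>

definition convex_on_nonneg :: "(real \<Rightarrow> ereal) \<Rightarrow> bool" where
  "convex_on_nonneg F \<longleftrightarrow>
     (\<forall>x\<ge>0. \<forall>y\<ge>0. \<forall>u\<in>{0..1}.
        F ((1 - u) * x + u * y) \<le> ereal (1 - u) * F x + ereal u * F y)"

definition lsc_nonneg :: "(real \<Rightarrow> ereal) \<Rightarrow> bool" where
  "lsc_nonneg F \<longleftrightarrow> (\<forall>x\<ge>0. F x \<le> Liminf (at x within {0..}) F)"

definition Gamma0 :: "(real \<Rightarrow> ereal) \<Rightarrow> bool" where
  "Gamma0 F \<longleftrightarrow> (\<forall>x\<ge>0. F x \<ge> 0) \<and> convex_on_nonneg F \<and> lsc_nonneg F \<and> F 1 = 0"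

definition recF :: "(real \<Rightarrow> ereal) \<Rightarrow> real \<Rightarrow> ereal" where
  "recF F r = Lim at_top (\<lambda>\<alpha>::real. F (1 + \<alpha> * r) / ereal \<alpha>)"

definition persp :: "(real \<Rightarrow> ereal) \<Rightarrow> real \<Rightarrow> real \<Rightarrow> ereal" where
  "persp F r t = (if t > 0 then ereal t * F (r / t) else recF F r)"

definition Htilde :: "(real \<Rightarrow> ereal) \<Rightarrow> real \<Rightarrow> real \<Rightarrow> real \<Rightarrow> ereal" where
  "Htilde F c r1 r2 =
     (INF \<theta>\<in>{0<..}. persp F \<theta> r1 + persp F \<theta> r2 + ereal (\<theta> * c))"

definition quadrant :: "(real \<times> real) set" where
  "quadrant = {0..} \<times> {0..}"

definition lsc_on_set :: "('a::topological_space) set \<Rightarrow> ('a \<Rightarrow> ereal) \<Rightarrow> bool" where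
  "lsc_on_set D g \<longleftrightarrow> (\<forall>p\<in>D. g p \<le> Liminf (at p within D) g)"

definition lsc_envelope :: "('a::topological_space) set \<Rightarrow> ('a \<Rightarrow> ereal) \<Rightarrow> 'a \<Rightarrow> ereal" where
  "lsc_envelope D f p = (SUP g\<in>{g. lsc_on_set D g \<and> (\<forall>q\<in>D. g q \<le> f q)}. g p)"

definition margpersp :: "(real \<Rightarrow> ereal) \<Rightarrow> ereal \<Rightarrow> real \<Rightarrow> real \<Rightarrow> ereal" where
  "margpersp F c r1 r2 =
     (if c = \<infinity> then F 0 * ereal (r1 + r2)
      else lsc_envelope quadrant (\<lambda>(a, b). Htilde F (real_of_ereal c) a b) (r1, r2))"

definition mpcost :: "(real \<Rightarrow> ereal) \<Rightarrow> ('a \<Rightarrow> 'a \<Rightarrow> ereal) \<Rightarrow> 'a \<Rightarrow> real \<Rightarrow> 'a \<Rightarrow> real \<Rightarrow> ereal" where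
  "mpcost F c x1 r1 x2 r2 = margpersp F (c x1 x2) r1 r2"

end

theory Submission
  imports Defs
begin

lemma G_conv: "Gamma0 F \<Longrightarrow> 0\<le>x \<Longrightarrow> 0\<le>y \<Longrightarrow> 0\<le>u \<Longrightarrow> u\<le>1 \<Longrightarrow>
  F ((1-u)*x+u*y) \<le> ereal(1-u)*F x + ereal u*F y"
  unfolding Gamma0_def convex_on_nonneg_def by auto

lemma G_nn: "Gamma0 F \<Longrightarrow> 0\<le>x \<Longrightarrow> 0 \<le> F x"
  unfolding Gamma0_def by auto

lemma G_one: "Gamma0 F \<Longrightarrow> F 1 = 0"
  unfolding Gamma0_def by auto

lemma L2:
  assumes G: "Gamma0 F" and s: "0 \<le> x" "x \<le> s0" "s0 < 1" and k: "ereal k \<le> F s0" "0 < k"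
  shows "ereal (k*(1-x)/(1-s0)) \<le> F x"
proof -
  define u where "u = (s0-x)/(1-x)"
  have u: "0 \<le> u" "u \<le> 1" using s by (auto simp: u_def field_simps)
  have nz: "1 - x \<noteq> 0" using s by simp
  have uu: "u*(1-x) = s0 - x" using nz unfolding u_def by simp
  have e: "(1-u)*x + u*1 = s0" using uu by (simp add: algebra_simps)
  have 1: "1 - u = (1-s0)/(1-x)" using s by (simp add: u_def field_simps)
  have "F s0 \<le> ereal(1-u)*F x + ereal u*F 1"
    using G_conv[OF G s(1), of 1 u] u unfolding e by simp
  hence le: "ereal k \<le> ereal(1-u) * F x" using k G_one[OF G] by simp
  have "0 \<le> F x" using G_nn[OF G s(1)] .
  thus ?thesis
  proof (cases "F x")
    case (real y)
    with le have "k \<le> (1-u)*y" by simp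
    hence "k \<le> (1-s0)/(1-x) * y" using 1 by simp
    hence "k*(1-x)/(1-s0) \<le> y" using s by (simp add: field_simps)
    thus ?thesis using real by simp
  qed auto
qed

lemma mono_q:
  assumes G: "Gamma0 F" and t: "0 < t" and ab: "0 < a" "a \<le> b"
  shows "F (1+a*t)/ereal a \<le> F (1+b*t)/ereal b"
proof -
  define u where "u = a/b"
  have u: "0 \<le> u" "u \<le> 1" using ab by (auto simp: u_def field_simps)
  have e: "(1-u)*1 + u*(1+b*t) = 1+a*t" using ab by (simp add: u_def field_simps)
  have "F (1+a*t) \<le> ereal(1-u)*F 1 + ereal u*F (1+b*t)"
    using G_conv[OF G _ _ u, of 1 "1+b*t"] t ab unfolding e by simp
  hence le: "F (1+a*t) \<le> ereal u * F (1+b*t)" using G_one[OF G] by simp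
  have n1: "0 \<le> F (1+a*t)" "0 \<le> F (1+b*t)" using G_nn[OF G] t ab by auto
  show ?thesis
  proof (cases "F (1+b*t)")
    case (real y)
    then obtain z where z: "F (1+a*t) = ereal z" using le n1 
      by (cases "F (1+a*t)") auto
    have "z \<le> u*y" using le z real by simp
    hence "z/a \<le> y/b" using ab by (simp add: u_def field_simps)
    thus ?thesis using z real ab by simp
  next
    case PInf
    thus ?thesis using ab n1 by (cases "F (1+a*t)") auto
  qed (use n1 in auto)
qed

lemma L1:
  assumes G: "Gamma0 F" and s: "1 < s0" "s0 \<le> x" and k: "ereal k \<le> F s0" "0 < k"
  shows "ereal (k*(x-1)/(s0-1)) \<le> F x"
proof -
  define u where "u = (s0-1)/(x-1)"
  have u: "0 \<le> u" "u \<le> 1" using s by (auto simp: u_def field_simps)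
  have nz: "x - 1 \<noteq> 0" using s by simp
  have uu: "u*(x-1) = s0 - 1" using nz unfolding u_def by simp
  have e: "(1-u)*1 + u*x = s0" using uu by (simp add: algebra_simps)
  have "F s0 \<le> ereal(1-u)*F 1 + ereal u*F x"
    using G_conv[OF G _ _ u, of 1 x] s unfolding e by simp
  hence le: "ereal k \<le> ereal u * F x" using k G_one[OF G] by simp
  have "0 \<le> F x" using G_nn[OF G] s by simp
  thus ?thesis
  proof (cases "F x")
    case (real y)
    with le have "k \<le> u*y" by simp
    hence "k \<le> (s0-1)/(x-1) * y" by (simp add: u_def)
    hence "k*(x-1)/(s0-1) \<le> y" using s by (simp add: field_simps)
    thus ?thesis using real by simp
  qed auto
qed

lemma recF_eq:
  assumes G: "Gamma0 F" and t: "0 < t"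
  shows "recF F t = (SUP a\<in>{0<..}. F (1+a*t)/ereal a)"
proof -
  let ?f = "\<lambda>a. F (1+a*t)/ereal a"
  let ?l = "SUP a\<in>{0<..}. ?f a"
  have "(?f \<longlongrightarrow> ?l) at_top"
  proof (rule increasing_tendsto)
    show "\<forall>\<^sub>F n in at_top. ?f n \<le> ?l"
      using eventually_gt_at_top[of 0] by eventually_elim (auto intro: SUP_upper)
  next
    fix x assume "x < ?l"
    then obtain a where a: "a > 0" "x < ?f a" by (auto simp: less_SUP_iff)
    show "\<forall>\<^sub>F n in at_top. x < ?f n"
      using eventually_ge_at_top[of a]
    proof eventually_elim
      case (elim n)
      thus ?case using mono_q[OF G t a(1) elim] a by order
    qed
  qed
  thus ?thesis unfolding recF_def by (intro tendsto_Lim) auto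
qed

lemma rec_ge: "Gamma0 F \<Longrightarrow> 0 < t \<Longrightarrow> 0 < a \<Longrightarrow> F (1+a*t)/ereal a \<le> recF F t"
  by (simp only: recF_eq) (rule SUP_upper, auto)

lemma persp_nn:
  assumes G: "Gamma0 F" and t: "0 < t" and a: "0 \<le> a"
  shows "0 \<le> persp F t a"
proof (cases "a > 0")
  case True
  thus ?thesis using G_nn[OF G, of "t/a"] t by (simp add: persp_def)
next
  case False
  hence "persp F t a = recF F t" by (simp add: persp_def)
  moreover have "F (1+1*t)/ereal 1 \<le> recF F t" by (rule rec_ge[OF G t]) simp
  moreover have "0 \<le> F (1+1*t)/ereal 1" using G_nn[OF G, of "1+t"] t by (cases "F (1+t)") auto
  ultimately show ?thesis by simp
qed

lemma P1:
  assumes G: "Gamma0 F" and s: "1 < s0" and k: "ereal k \<le> F s0" "0 < k"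
    and t: "0 < t" and a: "0 \<le> a" "s0*a \<le> t"
  shows "ereal (k*(t-a)/(s0-1)) \<le> persp F t a"
proof (cases "a > 0")
  case True
  have "s0 \<le> t/a" using a True by (simp add: field_simps)
  from L1[OF G s this k] have "ereal (k*(t/a-1)/(s0-1)) \<le> F (t/a)" .
  hence "ereal a * ereal (k*(t/a-1)/(s0-1)) \<le> ereal a * F (t/a)"
    using True by (intro ereal_mult_left_mono) auto
  moreover have "a * (k*(t/a-1)/(s0-1)) = k*(t-a)/(s0-1)" using True s
    by (simp add: field_simps)
  ultimately have "ereal (k*(t-a)/(s0-1)) \<le> ereal a * F (t/a)" by (metis times_ereal.simps(1))
  moreover have "persp F t a = ereal a * F (t/a)" using True by (simp add: persp_def)
  ultimately show ?thesis by simp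
next
  case False
  hence a0: "a = 0" using a by simp
  define \<alpha> where "\<alpha> = (s0-1)/t"
  have al: "\<alpha> > 0" using s t by (simp add: \<alpha>_def)
  have e: "1 + \<alpha>*t = s0" using t by (simp add: \<alpha>_def)
  have "F (1+\<alpha>*t)/ereal \<alpha> \<le> recF F t" by (rule rec_ge[OF G t al])
  hence "F s0 / ereal \<alpha> \<le> recF F t" unfolding e .
  moreover have "ereal k / ereal \<alpha> \<le> F s0 / ereal \<alpha>"
    using k al by (intro ereal_divide_right_mono) auto
  moreover have "ereal k / ereal \<alpha> = ereal (k*(t-a)/(s0-1))"
    using al a0 s t by (simp add: \<alpha>_def field_simps)
  ultimately show ?thesis using a0 by (simp add: persp_def)
qed

lemma P2:
  assumes G: "Gamma0 F" and s: "s0 < 1" and k: "ereal k \<le> F s0" "0 < k"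
    and t: "0 < t" and b: "0 < b" "t \<le> s0*b"
  shows "ereal (k*(b-t)/(1-s0)) \<le> persp F t b"
proof -
  have "t/b \<le> s0" using b by (simp add: field_simps)
  from L2[OF G _ this s k] have "ereal (k*(1-t/b)/(1-s0)) \<le> F (t/b)" using t b by simp
  hence "ereal b * ereal (k*(1-t/b)/(1-s0)) \<le> ereal b * F (t/b)"
    using b by (intro ereal_mult_left_mono) auto
  moreover have "b * (k*(1-t/b)/(1-s0)) = k*(b-t)/(1-s0)" using b s
    by (simp add: field_simps)
  ultimately have "ereal (k*(b-t)/(1-s0)) \<le> ereal b * F (t/b)" by (metis times_ereal.simps(1))
  moreover have "persp F t b = ereal b * F (t/b)" using b by (simp add: persp_def)
  ultimately show ?thesis by simp
qed

lemma Ht_nn: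
  assumes G: "Gamma0 F" and "0 \<le> a" "0 \<le> b" "0 \<le> c0"
  shows "0 \<le> Htilde F c0 a b"
  unfolding Htilde_def
proof (rule INF_greatest)
  fix t :: real assume "t \<in> {0<..}"
  hence t: "0 < t" by simp
  show "0 \<le> persp F t a + persp F t b + ereal (t*c0)"
    using persp_nn[OF G t, of a] persp_nn[OF G t, of b] assms t
    by (intro add_nonneg_nonneg) auto
qed

lemma Ht_sym: "Htilde F c0 a b = Htilde F c0 b a"
  unfolding Htilde_def by (simp add: add_ac)

lemma Ht_diag:
  assumes G: "Gamma0 F" and r: "0 < r"
  shows "Htilde F c0 r r \<le> ereal (r*c0)"
proof -
  have "Htilde F c0 r r \<le> persp F r r + persp F r r + ereal (r*c0)"
    unfolding Htilde_def using r by (intro INF_lower) auto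
  also have "persp F r r = 0" using r G_one[OF G] by (simp add: persp_def)
  finally show ?thesis by simp
qed

lemma getk:
  assumes G: "Gamma0 F" and strict: "\<And>s. s \<ge> 0 \<Longrightarrow> s \<noteq> 1 \<Longrightarrow> F s > 0"
    and "0 \<le> s" "s \<noteq> 1"
  obtains k where "0 < k" "ereal k \<le> F s"
proof -
  have "0 < F s" using strict assms by auto
  from ereal_dense2[OF this] obtain z where "0 < ereal z" "ereal z < F s" by auto
  thus ?thesis using that[of z] by auto
qed

lemma sum3a: "ereal d \<le> x \<Longrightarrow> 0 \<le> y \<Longrightarrow> 0 \<le> (z::ereal) \<Longrightarrow> ereal d \<le> x + y + z"
  by (metis add_increasing2)
lemma sum3b: "ereal d \<le> y \<Longrightarrow> 0 \<le> x \<Longrightarrow> 0 \<le> (z::ereal) \<Longrightarrow> ereal d \<le> x + y + z"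
  by (metis add_increasing add_increasing2)
lemma sum3c: "ereal d \<le> z \<Longrightarrow> 0 \<le> x \<Longrightarrow> 0 \<le> (y::ereal) \<Longrightarrow> ereal d \<le> x + y + z"
  by (metis add_increasing add_nonneg_nonneg)

lemma Ht_pos_lt:
  assumes G: "Gamma0 F" and strict: "\<And>s. s \<ge> 0 \<Longrightarrow> s \<noteq> 1 \<Longrightarrow> F s > 0"
    and r: "0 \<le> r1" "r1 < r2" and c0: "0 \<le> c0"
  shows "\<exists>\<eta>>0. \<exists>\<delta>>0. \<forall>a b. 0 \<le> a \<longrightarrow> 0 \<le> b \<longrightarrow> dist (a,b) (r1,r2) < \<eta>
            \<longrightarrow> ereal \<delta> \<le> Htilde F c0 a b"
proof -
  define d where "d = r2 - r1"
  define \<eta> where "\<eta> = d/8"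
  define M where "M = (r1+r2)/2"
  define s1 where "s1 = M/(r1+\<eta>)"
  define s2 where "s2 = M/(r2-\<eta>)"
  have d: "0 < d" using r by (simp add: d_def)
  have eta: "0 < \<eta>" using d by (simp add: \<eta>_def)
  have pa: "0 < r1 + \<eta>" using eta r by simp
  have pb: "0 < r2 - \<eta>" using r by (simp add: \<eta>_def d_def)
  have s1: "1 < s1" using pa r unfolding s1_def M_def \<eta>_def d_def by (simp add: field_simps)
  have s2: "s2 < 1" "0 \<le> s2" using pb r unfolding s2_def M_def \<eta>_def d_def by (auto simp: field_simps)
  obtain k1 where k1: "0 < k1" "ereal k1 \<le> F s1" using getk[OF G strict, of s1] s1 by auto
  obtain k2 where k2: "0 < k2" "ereal k2 \<le> F s2" using getk[OF G strict, of s2] s2 by auto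
  define \<delta> where "\<delta> = min (k1*(3*d/8)/(s1-1)) (k2*(3*d/8)/(1-s2))"
  have del: "0 < \<delta>" using k1 k2 s1 s2 d by (simp add: \<delta>_def)
  have M1: "s1*(r1+\<eta>) = M" using pa by (simp add: s1_def)
  have M2: "s2*(r2-\<eta>) = M" using pb by (simp add: s2_def)
  have "\<forall>a b. 0 \<le> a \<longrightarrow> 0 \<le> b \<longrightarrow> dist (a,b) (r1,r2) < \<eta>
            \<longrightarrow> ereal \<delta> \<le> Htilde F c0 a b"
  proof (intro allI impI)
    fix a b :: real assume a: "0 \<le> a" and b: "0 \<le> b" and ds: "dist (a,b) (r1,r2) < \<eta>"
    have da: "\<bar>a - r1\<bar> < \<eta>" using dist_fst_le[of "(a,b)" "(r1,r2)"] ds by (simp add: dist_real_def)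
    have db: "\<bar>b - r2\<bar> < \<eta>" using dist_snd_le[of "(a,b)" "(r1,r2)"] ds by (simp add: dist_real_def)
    show "ereal \<delta> \<le> Htilde F c0 a b"
      unfolding Htilde_def
    proof (rule INF_greatest)
      fix t :: real assume "t \<in> {0<..}"
      hence t: "0 < t" by simp
      have nn: "0 \<le> persp F t a" "0 \<le> persp F t b" "0 \<le> ereal (t*c0)"
        using persp_nn[OF G t] a b t c0 by auto
      show "ereal \<delta> \<le> persp F t a + persp F t b + ereal (t*c0)"
      proof (cases "M \<le> t")
        case True
        have "s1*a \<le> s1*(r1+\<eta>)" using da s1 by (intro mult_left_mono) auto
        hence "s1*a \<le> t" using M1 True by simp
        from P1[OF G s1 k1(2) k1(1) t a this] have 1: "ereal (k1*(t-a)/(s1-1)) \<le> persp F t a" .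
        have "3*d/8 \<le> t - a" using True da abs_ge_self[of "a - r1"] unfolding M_def \<eta>_def d_def by (simp add: field_simps)
        hence "k1*(3*d/8) \<le> k1*(t-a)" using k1 by (intro mult_left_mono) auto
        hence "k1*(3*d/8)/(s1-1) \<le> k1*(t-a)/(s1-1)" using s1 by (intro divide_right_mono) auto
        hence "\<delta> \<le> k1*(t-a)/(s1-1)" unfolding \<delta>_def by linarith
        with 1 have "ereal \<delta> \<le> persp F t a" by (meson ereal_less_eq(3) order_trans)
        thus ?thesis using nn by (intro sum3a)
      next
        case False
        have bp: "0 < b" using db pb by linarith
        have "s2*(r2-\<eta>) \<le> s2*b" using db s2 by (intro mult_left_mono) auto
        hence "t \<le> s2*b" using M2 False by simp
        from P2[OF G s2(1) k2(2) k2(1) t bp this] have 1: "ereal (k2*(b-t)/(1-s2)) \<le> persp F t b" .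
        have "3*d/8 \<le> b - t" using False db abs_ge_self[of "r2 - b"] unfolding M_def \<eta>_def d_def by (simp add: field_simps abs_minus_commute)
        hence "k2*(3*d/8) \<le> k2*(b-t)" using k2 by (intro mult_left_mono) auto
        hence "k2*(3*d/8)/(1-s2) \<le> k2*(b-t)/(1-s2)" using s2 by (intro divide_right_mono) auto
        hence "\<delta> \<le> k2*(b-t)/(1-s2)" unfolding \<delta>_def by linarith
        with 1 have "ereal \<delta> \<le> persp F t b" by (meson ereal_less_eq(3) order_trans)
        thus ?thesis using nn by (intro sum3b)
      qed
    qed
  qed
  thus ?thesis using eta del by blast
qed

lemma Ht_pos_diag:
  assumes G: "Gamma0 F" and strict: "\<And>s. s \<ge> 0 \<Longrightarrow> s \<noteq> 1 \<Longrightarrow> F s > 0"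
    and r: "0 < r" and c0: "0 < c0"
  shows "\<exists>\<eta>>0. \<exists>\<delta>>0. \<forall>a b. 0 \<le> a \<longrightarrow> 0 \<le> b \<longrightarrow> dist (a,b) (r,r) < \<eta>
            \<longrightarrow> ereal \<delta> \<le> Htilde F c0 a b"
proof -
  define \<eta> where "\<eta> = r/2"
  have eta: "0 < \<eta>" using r by (simp add: \<eta>_def)
  obtain k where k: "0 < k" "ereal k \<le> F (1/2)" using getk[OF G strict, of "1/2"] by auto
  define \<delta> where "\<delta> = min (r*c0/4) (k*(r/4)/(1-1/2))"
  have del: "0 < \<delta>" using k r c0 by (simp add: \<delta>_def)
  have "\<forall>a b. 0 \<le> a \<longrightarrow> 0 \<le> b \<longrightarrow> dist (a,b) (r,r) < \<eta>
            \<longrightarrow> ereal \<delta> \<le> Htilde F c0 a b"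
  proof (intro allI impI)
    fix a b :: real assume a: "0 \<le> a" and b: "0 \<le> b" and ds: "dist (a,b) (r,r) < \<eta>"
    have db: "\<bar>b - r\<bar> < \<eta>" using dist_snd_le[of "(a,b)" "(r,r)"] ds by (simp add: dist_real_def)
    show "ereal \<delta> \<le> Htilde F c0 a b"
      unfolding Htilde_def
    proof (rule INF_greatest)
      fix t :: real assume "t \<in> {0<..}"
      hence t: "0 < t" by simp
      have nn: "0 \<le> persp F t a" "0 \<le> persp F t b" "0 \<le> ereal (t*c0)"
        using persp_nn[OF G t] a b t c0 by auto
      show "ereal \<delta> \<le> persp F t a + persp F t b + ereal (t*c0)"
      proof (cases "r/4 \<le> t")
        case True
        have "r/4*c0 \<le> t*c0" using True c0 by (intro mult_right_mono) auto
        hence "\<delta> \<le> t*c0" unfolding \<delta>_def by linarith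
        hence "ereal \<delta> \<le> ereal (t*c0)" by simp
        thus ?thesis using nn by (intro sum3c)
      next
        case False
        have bp: "0 < b" using db eta unfolding \<eta>_def by linarith
        have "t \<le> 1/2*b" using False db unfolding \<eta>_def by linarith
        from P2[OF G _ k(2) k(1) t bp this] have 1: "ereal (k*(b-t)/(1-1/2)) \<le> persp F t b" by simp
        have "r/4 \<le> b - t" using False db unfolding \<eta>_def by linarith
        hence "k*(r/4) \<le> k*(b-t)" using k by (intro mult_left_mono) auto
        hence "k*(r/4)/(1-1/2) \<le> k*(b-t)/(1-1/2)" by (intro divide_right_mono) auto
        hence "\<delta> \<le> k*(b-t)/(1-1/2)" unfolding \<delta>_def by linarith
        with 1 have "ereal \<delta> \<le> persp F t b" by (meson ereal_less_eq(3) order_trans)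
        thus ?thesis using nn by (intro sum3b)
      qed
    qed
  qed
  thus ?thesis using eta del by blast
qed

lemma env_le: "p \<in> D \<Longrightarrow> lsc_envelope D f p \<le> f p"
  unfolding lsc_envelope_def by (rule SUP_least) auto

lemma env_ge0:
  assumes "\<forall>q\<in>D. 0 \<le> f q"
  shows "0 \<le> lsc_envelope D f p"
proof -
  have "(\<lambda>_. 0) \<in> {g. lsc_on_set D g \<and> (\<forall>q\<in>D. g q \<le> f q)}"
    using assms by (auto simp: lsc_on_set_def intro: Liminf_bounded)
  hence "(\<lambda>_. 0::ereal) p \<le> lsc_envelope D f p"
    unfolding lsc_envelope_def by (rule SUP_upper)
  thus ?thesis by simp
qed

lemma env_pos:
  fixes f :: "real \<times> real \<Rightarrow> ereal"
  assumes nn: "\<forall>q\<in>D. 0 \<le> f q" and eta: "0 < \<eta>" and del: "0 < \<delta>"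
    and loc: "\<forall>q\<in>D. dist q p < \<eta> \<longrightarrow> ereal \<delta> \<le> f q" and p: "p \<in> D"
  shows "ereal \<delta> \<le> lsc_envelope D f p"
proof -
  define g where "g = (\<lambda>q. if dist q p < \<eta> then ereal \<delta> else 0)"
  have gnn: "\<And>q. 0 \<le> g q" using del by (simp add: g_def)
  have "lsc_on_set D g"
    unfolding lsc_on_set_def
  proof
    fix q assume q: "q \<in> D"
    show "g q \<le> Liminf (at q within D) g"
    proof (cases "dist q p < \<eta>")
      case True
      have "\<forall>\<^sub>F x in at q within D. ereal \<delta> \<le> g x"
        unfolding eventually_at
      proof (intro exI[of _ "\<eta> - dist q p"] conjI ballI impI)
        show "0 < \<eta> - dist q p" using True by simp
      next
        fix x assume "x \<in> D" "x \<noteq> q \<and> dist x q < \<eta> - dist q p"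
        hence "dist x p < \<eta>" using dist_triangle[of x p q] by linarith
        thus "ereal \<delta> \<le> g x" by (simp add: g_def)
      qed
      hence "ereal \<delta> \<le> Liminf (at q within D) g" by (rule Liminf_bounded)
      thus ?thesis using True by (simp add: g_def)
    next
      case False
      have "0 \<le> Liminf (at q within D) g" using gnn by (intro Liminf_bounded) auto
      thus ?thesis using False by (simp add: g_def)
    qed
  qed
  moreover have "\<forall>q\<in>D. g q \<le> f q" using nn loc by (auto simp: g_def)
  ultimately have "g p \<le> lsc_envelope D f p"
    unfolding lsc_envelope_def by (intro SUP_upper) auto
  thus ?thesis using eta by (simp add: g_def)
qed

lemma env_zero00:
  fixes f :: "real \<times> real \<Rightarrow> ereal"
  assumes diag: "\<And>r. 0 < r \<Longrightarrow> f (r,r) \<le> ereal (r*c0)" and c0: "0 \<le> c0"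
  shows "lsc_envelope quadrant f (0,0) \<le> 0"
  unfolding lsc_envelope_def
proof (rule SUP_least)
  fix g assume "g \<in> {g. lsc_on_set quadrant g \<and> (\<forall>q\<in>quadrant. g q \<le> f q)}"
  hence lsc: "lsc_on_set quadrant g" and mi: "\<forall>q\<in>quadrant. g q \<le> f q" by auto
  have "g (0,0) \<le> Liminf (at (0,0) within quadrant) g"
    using lsc by (auto simp: lsc_on_set_def quadrant_def)
  also have "\<dots> \<le> 0"
    unfolding Liminf_within
  proof (rule SUP_least)
    fix e :: real assume "e \<in> {0<..}"
    hence e: "0 < e" by simp
    show "Inf (g ` (quadrant \<inter> ball (0,0) e - {(0,0)})) \<le> 0"
    proof (rule ereal_le_epsilon2)
      fix \<epsilon> :: real assume eps: "0 < \<epsilon>"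
      define r where "r = min (e/4) (\<epsilon>/(c0+1))"
      have r1: "0 < r" using e eps c0 unfolding r_def by auto
      have r2: "r \<le> e/4" unfolding r_def by (rule min.cobounded1)
      have r3: "r \<le> \<epsilon>/(c0+1)" unfolding r_def by (rule min.cobounded2)
      note r = r1 r2 r3
      have "dist (r,r) (0,0) \<le> \<bar>r\<bar> + \<bar>r\<bar>"
        unfolding dist_Pair_Pair dist_real_def using sqrt_sum_squares_le_sum_abs[of r r] by simp
      hence "dist (0,0) (r,r) < e" using r e by (simp add: dist_commute)
      hence mem: "(r,r) \<in> quadrant \<inter> ball (0,0) e - {(0,0)}" using r by (auto simp: quadrant_def)
      have "Inf (g ` (quadrant \<inter> ball (0,0) e - {(0,0)})) \<le> g (r,r)"
        using mem by (intro INF_lower) auto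
      also have "\<dots> \<le> f (r,r)" using mi r by (auto simp: quadrant_def)
      also have "\<dots> \<le> ereal (r*c0)" using diag r by simp
      also have "r*c0 \<le> \<epsilon>"
      proof -
        have "r*c0 \<le> \<epsilon>/(c0+1)*c0" using r c0 by (intro mult_right_mono) auto
        also have "\<dots> \<le> \<epsilon>" using eps c0 by (simp add: field_simps)
        finally show ?thesis .
      qed
      hence "ereal (r*c0) \<le> 0 + ereal \<epsilon>" by simp
      finally show "Inf (g ` (quadrant \<inter> ball (0,0) e - {(0,0)})) \<le> 0 + ereal \<epsilon>" .
    qed
  qed
  finally show "g (0,0) \<le> 0" .
qed

definition sw :: "real \<times> real \<Rightarrow> real \<times> real" where "sw q = (snd q, fst q)"

lemma sw_dist: "dist (sw x) (sw y) = dist x y"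
  by (cases x, cases y) (simp add: sw_def dist_Pair_Pair add.commute)

lemma sw_sw[simp]: "sw (sw x) = x" by (simp add: sw_def)

lemma sw_quad: "sw x \<in> quadrant \<longleftrightarrow> x \<in> quadrant"
  by (cases x) (auto simp: sw_def quadrant_def)

lemma sw_img: "sw ` (quadrant \<inter> ball p e - {p}) = quadrant \<inter> ball (sw p) e - {sw p}"
proof (intro equalityI subsetI)
  fix y assume "y \<in> sw ` (quadrant \<inter> ball p e - {p})"
  then obtain x where x0: "x \<in> quadrant \<inter> ball p e - {p}" and y: "y = sw x" by blast
  hence x: "x \<in> quadrant" "dist p x < e" "x \<noteq> p" by (auto simp: mem_ball)
  have "y \<in> quadrant" using x y sw_quad by simp
  moreover have "dist (sw p) y < e" using x y sw_dist[of p x] by simp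
  moreover have "y \<noteq> sw p" using x y by (metis sw_sw)
  ultimately show "y \<in> quadrant \<inter> ball (sw p) e - {sw p}" by (simp add: mem_ball)
next
  fix y assume y: "y \<in> quadrant \<inter> ball (sw p) e - {sw p}"
  have "sw y \<in> quadrant" using y sw_quad[of y] by simp
  moreover have "dist p (sw y) < e" using y sw_dist[of "sw p" y] by (simp add: mem_ball)
  moreover have "sw y \<noteq> p" using y by (metis sw_sw DiffD2 singletonI)
  ultimately have "sw y \<in> quadrant \<inter> ball p e - {p}" by (simp add: mem_ball)
  moreover have "y = sw (sw y)" by simp
  ultimately show "y \<in> sw ` (quadrant \<inter> ball p e - {p})" by blast
qed

lemma lsc_sw: "lsc_on_set quadrant g \<Longrightarrow> lsc_on_set quadrant (g \<circ> sw)"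
  unfolding lsc_on_set_def
proof
  assume H: "\<forall>p\<in>quadrant. g p \<le> Liminf (at p within quadrant) g"
  fix p assume p: "p \<in> quadrant"
  have "(g \<circ> sw) p \<le> Liminf (at (sw p) within quadrant) g" using H p sw_quad[of p] by simp
  also have "\<dots> = Liminf (at p within quadrant) (g \<circ> sw)"
    unfolding Liminf_within image_comp[symmetric] sw_img ..
  finally show "(g \<circ> sw) p \<le> Liminf (at p within quadrant) (g \<circ> sw)" .
qed

lemma env_sw_le:
  assumes sym: "\<forall>a b. f (a,b) = f (b,a)"
  shows "lsc_envelope quadrant f p \<le> lsc_envelope quadrant f (sw p)"
  unfolding lsc_envelope_def
proof (rule SUP_least)
  fix g assume "g \<in> {g. lsc_on_set quadrant g \<and> (\<forall>q\<in>quadrant. g q \<le> f q)}"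
  hence lsc: "lsc_on_set quadrant g" and mi: "\<forall>q\<in>quadrant. g q \<le> f q" by auto
  have fs: "f (sw q) = f q" for q using sym by (cases q) (simp add: sw_def)
  have "\<forall>q\<in>quadrant. (g \<circ> sw) q \<le> f q"
  proof
    fix q assume "q \<in> quadrant"
    hence "sw q \<in> quadrant" using sw_quad by simp
    thus "(g \<circ> sw) q \<le> f q" using mi fs[of q] by auto
  qed
  hence "g \<circ> sw \<in> {g. lsc_on_set quadrant g \<and> (\<forall>q\<in>quadrant. g q \<le> f q)}"
    using lsc_sw[OF lsc] by auto
  hence "(g \<circ> sw) (sw p) \<le> (SUP g\<in>{g. lsc_on_set quadrant g \<and> (\<forall>q\<in>quadrant. g q \<le> f q)}. g (sw p))"
    by (rule SUP_upper)
  thus "g p \<le> (SUP g\<in>{g. lsc_on_set quadrant g \<and> (\<forall>q\<in>quadrant. g q \<le> f q)}. g (sw p))" by simp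
qed

lemma env_sw:
  assumes sym: "\<forall>a b. f (a,b) = f (b,a)"
  shows "lsc_envelope quadrant f (a,b) = lsc_envelope quadrant f (b,a)"
  using env_sw_le[OF sym, of "(a,b)"] env_sw_le[OF sym, of "(b,a)"] by (simp add: sw_def)

lemma envpos_from:
  assumes nn: "\<forall>q\<in>quadrant. 0 \<le> f q"
    and ex: "\<exists>\<eta>>0. \<exists>\<delta>>0. \<forall>a b. 0 \<le> a \<longrightarrow> 0 \<le> b \<longrightarrow> dist (a,b) (r1,r2) < \<eta>
            \<longrightarrow> ereal \<delta> \<le> f (a,b)"
    and r: "0 \<le> r1" "0 \<le> r2"
  shows "0 < lsc_envelope quadrant f (r1,r2)"
proof -
  obtain \<eta> \<delta> where e: "0 < \<eta>" "0 < \<delta>" and H: "\<forall>a b. 0 \<le> a \<longrightarrow> 0 \<le> b \<longrightarrow> dist (a,b) (r1,r2) < \<eta>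
            \<longrightarrow> ereal \<delta> \<le> f (a,b)" using ex by blast
  have "\<forall>q\<in>quadrant. dist q (r1,r2) < \<eta> \<longrightarrow> ereal \<delta> \<le> f q"
    using H by (auto simp: quadrant_def)
  from env_pos[OF nn e this] r have "ereal \<delta> \<le> lsc_envelope quadrant f (r1,r2)"
    by (simp add: quadrant_def)
  thus ?thesis using e by (meson ereal_less(2) less_le_trans)
qed

lemma mp_fin:
  assumes G: "Gamma0 F" and strict: "\<And>s. s \<ge> 0 \<Longrightarrow> s \<noteq> 1 \<Longrightarrow> F s > 0"
    and c0: "0 \<le> c0" and r: "0 \<le> r1" "0 \<le> r2"
  shows "0 \<le> margpersp F (ereal c0) r1 r2 \<and> margpersp F (ereal c0) r1 r2 = margpersp F (ereal c0) r2 r1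
     \<and> (margpersp F (ereal c0) r1 r2 = 0 \<longleftrightarrow> (r1 = 0 \<and> r2 = 0) \<or> (r1 = r2 \<and> c0 = 0))"
proof -
  define f where "f = (\<lambda>(a,b). Htilde F c0 a b)"
  have mp: "margpersp F (ereal c0) a b = lsc_envelope quadrant f (a,b)" for a b
    by (simp add: margpersp_def f_def)
  have nn: "\<forall>q\<in>quadrant. 0 \<le> f q" using Ht_nn[OF G _ _ c0] by (auto simp: quadrant_def f_def)
  have sym: "\<forall>a b. f (a,b) = f (b,a)" using Ht_sym by (simp add: f_def)
  have ge: "0 \<le> lsc_envelope quadrant f (r1,r2)" by (rule env_ge0[OF nn])
  have sy: "lsc_envelope quadrant f (r1,r2) = lsc_envelope quadrant f (r2,r1)" by (rule env_sw[OF sym])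
  have z: "lsc_envelope quadrant f (r1,r2) = 0 \<longleftrightarrow> (r1 = 0 \<and> r2 = 0) \<or> (r1 = r2 \<and> c0 = 0)"
  proof
    assume h0: "lsc_envelope quadrant f (r1,r2) = 0"
    show "(r1 = 0 \<and> r2 = 0) \<or> (r1 = r2 \<and> c0 = 0)"
    proof (rule ccontr)
      assume nc: "\<not> ?thesis"
      have "0 < lsc_envelope quadrant f (r1,r2)"
      proof (cases "r1 < r2")
        case True
        have E0: "\<exists>\<eta>>0. \<exists>\<delta>>0. \<forall>a b. 0 \<le> a \<longrightarrow> 0 \<le> b \<longrightarrow> dist (a,b) (r1,r2) < \<eta>
            \<longrightarrow> ereal \<delta> \<le> Htilde F c0 a b"
            by (rule Ht_pos_lt[OF G _ r(1) True c0]) (fact strict)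
        show ?thesis using E0 unfolding f_def
          by (intro envpos_from[OF nn[unfolded f_def] _ r]) simp
      next
        case False
        show ?thesis
        proof (cases "r2 < r1")
          case True
          have E0: "\<exists>\<eta>>0. \<exists>\<delta>>0. \<forall>a b. 0 \<le> a \<longrightarrow> 0 \<le> b \<longrightarrow> dist (a,b) (r2,r1) < \<eta>
            \<longrightarrow> ereal \<delta> \<le> Htilde F c0 a b"
            by (rule Ht_pos_lt[OF G _ r(2) True c0]) (fact strict)
          from E0 obtain \<eta> \<delta> where e: "0 < \<eta>" "0 < \<delta>" and H: "\<forall>a b. 0 \<le> a \<longrightarrow> 0 \<le> b \<longrightarrow> dist (a,b) (r2,r1) < \<eta>
            \<longrightarrow> ereal \<delta> \<le> Htilde F c0 a b" by blast
          have "\<forall>a b. 0 \<le> a \<longrightarrow> 0 \<le> b \<longrightarrow> dist (a,b) (r1,r2) < \<eta>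
            \<longrightarrow> ereal \<delta> \<le> f (a,b)"
          proof (intro allI impI)
            fix a b assume ab: "0 \<le> (a::real)" "0 \<le> (b::real)" "dist (a,b) (r1,r2) < \<eta>"
            have "dist (b,a) (r2,r1) < \<eta>" using ab(3) sw_dist[of "(a,b)" "(r1,r2)"] by (simp add: sw_def)
            hence "ereal \<delta> \<le> Htilde F c0 b a" using H ab by blast
            thus "ereal \<delta> \<le> f (a,b)" by (simp add: f_def Ht_sym)
          qed
          hence "\<exists>\<eta>>0. \<exists>\<delta>>0. \<forall>a b. 0 \<le> a \<longrightarrow> 0 \<le> b \<longrightarrow> dist (a,b) (r1,r2) < \<eta>
            \<longrightarrow> ereal \<delta> \<le> f (a,b)" using e by blast
          thus ?thesis by (intro envpos_from[OF nn _ r])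
        next
          case False
          hence eq: "r1 = r2" using \<open>\<not> r1 < r2\<close> by simp
          hence rp: "0 < r1" "c0 \<noteq> 0" using nc r by auto
          hence "0 < c0" using c0 by simp
          have E0: "\<exists>\<eta>>0. \<exists>\<delta>>0. \<forall>a b. 0 \<le> a \<longrightarrow> 0 \<le> b \<longrightarrow> dist (a,b) (r1,r1) < \<eta>
            \<longrightarrow> ereal \<delta> \<le> Htilde F c0 a b"
            by (rule Ht_pos_diag[OF G _ rp(1) \<open>0 < c0\<close>]) (fact strict)
          from E0 show ?thesis using eq unfolding f_def
            by (intro envpos_from[OF nn[unfolded f_def] _ r]) simp
        qed
      qed
      thus False using h0 by simp
    qed
  next
    assume "(r1 = 0 \<and> r2 = 0) \<or> (r1 = r2 \<and> c0 = 0)"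
    thus "lsc_envelope quadrant f (r1,r2) = 0"
    proof
      assume "r1 = 0 \<and> r2 = 0"
      moreover have "lsc_envelope quadrant f (0,0) \<le> 0"
        using Ht_diag[OF G] c0 by (intro env_zero00[of f c0]) (auto simp: f_def)
      ultimately show ?thesis using ge by simp
    next
      assume h: "r1 = r2 \<and> c0 = 0"
      show ?thesis
      proof (cases "r1 = 0")
        case True
        moreover have "lsc_envelope quadrant f (0,0) \<le> 0"
          using Ht_diag[OF G] c0 by (intro env_zero00[of f c0]) (auto simp: f_def)
        ultimately show ?thesis using ge h by simp
      next
        case False
        hence rp: "0 < r1" using r by simp
        have "lsc_envelope quadrant f (r1,r1) \<le> f (r1,r1)" using r by (intro env_le) (simp add: quadrant_def)
        also have "\<dots> \<le> 0" using Ht_diag[OF G rp, of c0] h by (simp add: f_def zero_ereal_def)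
        finally show ?thesis using ge h by simp
      qed
    qed
  qed
  show ?thesis unfolding mp using ge sy z by simp
qed

lemma mp_inf:
  assumes G: "Gamma0 F" and strict: "\<And>s. s \<ge> 0 \<Longrightarrow> s \<noteq> 1 \<Longrightarrow> F s > 0"
    and r: "0 \<le> r1" "0 \<le> r2"
  shows "0 \<le> margpersp F \<infinity> r1 r2 \<and> margpersp F \<infinity> r1 r2 = margpersp F \<infinity> r2 r1
     \<and> (margpersp F \<infinity> r1 r2 = 0 \<longleftrightarrow> (r1 = 0 \<and> r2 = 0))"
proof -
  have F0: "0 < F 0" using strict[of 0] by simp
  have m: "margpersp F \<infinity> a b = F 0 * ereal (a+b)" for a b by (simp add: margpersp_def)
  have 1: "0 \<le> F 0 * ereal (r1+r2)" using F0 r by (cases "F 0") auto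
  have 2: "F 0 * ereal (r1+r2) = 0 \<longleftrightarrow> r1 = 0 \<and> r2 = 0" using F0 r by (cases "F 0") auto
  show ?thesis unfolding m using 1 2 by (simp add: add.commute)
qed


theorem mainTheorem13:
  fixes F :: "real \<Rightarrow> ereal" and X :: "'a set" and c :: "'a \<Rightarrow> 'a \<Rightarrow> ereal"
  assumes F: "Gamma0 F"
    and strict: "\<And>s. s \<ge> 0 \<Longrightarrow> s \<noteq> 1 \<Longrightarrow> F s > 0"
    and c_nonneg: "\<And>x1 x2. x1 \<in> X \<Longrightarrow> x2 \<in> X \<Longrightarrow> c x1 x2 \<ge> 0"
    and c_sym: "\<And>x1 x2. x1 \<in> X \<Longrightarrow> x2 \<in> X \<Longrightarrow> c x1 x2 = c x2 x1"
    and c_zero: "\<And>x1 x2. x1 \<in> X \<Longrightarrow> x2 \<in> X \<Longrightarrow> (c x1 x2 = 0 \<longleftrightarrow> x1 = x2)"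
  shows "\<forall>x1\<in>X. \<forall>x2\<in>X. \<forall>r1\<ge>0. \<forall>r2\<ge>0.
           mpcost F c x1 r1 x2 r2 \<ge> 0
         \<and> mpcost F c x1 r1 x2 r2 = mpcost F c x2 r2 x1 r1
         \<and> (mpcost F c x1 r1 x2 r2 = 0 \<longleftrightarrow>
              (r1 = 0 \<and> r2 = 0) \<or> (r1 = r2 \<and> x1 = x2))"
proof (intro ballI allI impI)
  fix x1 x2 r1 r2 assume x: "x1 \<in> X" "x2 \<in> X" and r: "0 \<le> (r1::real)" "0 \<le> (r2::real)"
  have m1: "mpcost F c x1 r1 x2 r2 = margpersp F (c x1 x2) r1 r2" by (simp add: mpcost_def)
  have m2: "mpcost F c x2 r2 x1 r1 = margpersp F (c x1 x2) r2 r1" using c_sym[OF x] by (simp add: mpcost_def)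
  have cn: "0 \<le> c x1 x2" using c_nonneg[OF x] .
  have cz: "c x1 x2 = 0 \<longleftrightarrow> x1 = x2" using c_zero[OF x] .
  show "mpcost F c x1 r1 x2 r2 \<ge> 0
         \<and> mpcost F c x1 r1 x2 r2 = mpcost F c x2 r2 x1 r1
         \<and> (mpcost F c x1 r1 x2 r2 = 0 \<longleftrightarrow>
              (r1 = 0 \<and> r2 = 0) \<or> (r1 = r2 \<and> x1 = x2))"
  proof (cases "c x1 x2")
    case (real c0)
    have c0: "0 \<le> c0" using cn real by simp
    have "c0 = 0 \<longleftrightarrow> x1 = x2" using cz real by (simp add: zero_ereal_def)
    thus ?thesis using mp_fin[OF F _ c0 r] strict unfolding m1 m2 real by auto
  next
    case PInf
    have "x1 \<noteq> x2" using cz PInf by auto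
    thus ?thesis using mp_inf[OF F _ r] strict unfolding m1 m2 PInf by auto
  next
    case MInf
    thus ?thesis using cn by simp
  qed
qed

end
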